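(* Let $r,k$ be positive integers and $n$ an integer. Then for every $l\ge1$ $$\left.\frac{d^l}{dt^l}M_r(t;n,k)\right|_{t=1}=\sum_{m=1}^{l}s(l,m)\,\frac{Q_r(n,k,m)}{k^{rm}},$$ and $$M_r(t;n,k)=\delta_{k^r\mid n}+\sum_{l=1}^{k}\frac{(t-1)^l}{l!}\sum_{m=1}^{l}s(l,m)\frac{Q_r(n,k,m)}{k^{rm}},\qquad M_r(e^\lambda;n,k)=\delta_{k^r\mid n}+\sum_{l=1}^{\infty}\frac{\lambda^l}{l!}\frac{Q_r(n,k,l)}{k^{rl}}.$$ In particular, for $r=1$: $\left.\frac{d^l}{dt^l}M(t;n,k)\right|_{t=1}=\sum_{m=1}^{l}s(l,m)\frac{Q_1(n,k,m)}{k^{m}}$ for $l\ge1$, $M(t;n,k)=\delta_{k\mid n}+\sum_{l=1}^{k}\frac{(t-1)^l}{l!}\sum_{m=1}^{l}s(l,m)\frac{Q_1(n,k,m)}{k^{m}}$, and $M(e^\lambda;n,k)=\delta_{k\mid n}+\sum_{l=1}^{\infty}\frac{\lambda^l}{l!}\frac{Q_1(n,k,l)}{k^{l}}$.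
   Context: For positive integers $a,b,r$, $(a,b)_r$ denotes the largest $r$-th power $e^r$ dividing both $a$ and $b$. The $r$-Ramanujan sum is $c_r(n,k):=\sum_{1\le m\le k^r,\ (m,k^r)_r=1}\epsilon_{k^r}^{mn}$ with $\epsilon_N:=e^{2\pi i/N}$; for $r=1$ this is the classical Ramanujan sum $c(n,k)$. Define $M_r(t;n,k):=\frac{1}{k^r}\sum_{d\mid k}c_r(n,k/d)\,t^d$ and $M(t;n,k):=M_1(t;n,k)$. Let $\delta_{k^r\mid n}:=M_r(1;n,k)$, which equals $1$ if $k^r\mid n$ and $0$ otherwise. For a positive integer $m$, fix integers $a_1,\dots,a_m$ with $(a_i,k)=1$, and let $Q_r(n,k,m)$ be the number of solutions $(x_1,\dots,x_m;y_1,\dots,y_m)$ with $x_i$ taken modulo $k$ and $y_i$ taken modulo $k^r$ of the Cohen semilinear congruence $a_1x_1^ry_1+\dots+a_mx_m^ry_m\equiv n\pmod{k^r}$. The Stirling numbers of the first kind $s(l,m)$ are defined by $\prod_{i=0}^{l-1}(t-i)=\sum_{m=0}^{l}s(l,m)t^m$. *)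

theory Defs
  imports "HOL-Analysis.Analysis" "HOL-Library.FuncSet" "HOL-Computational_Algebra.Polynomial"
    "HOL-Number_Theory.Cong"
begin

definition rgcd :: "nat \<Rightarrow> nat \<Rightarrow> nat \<Rightarrow> nat" where
  "rgcd r a b = Max {e ^ r | e. e \<ge> 1 \<and> e ^ r dvd a \<and> e ^ r dvd b}"

definition unit_root :: "nat \<Rightarrow> complex" where
  "unit_root N = exp (2 * of_real pi * \<i> / of_nat N)"

definition ram_r :: "nat \<Rightarrow> int \<Rightarrow> nat \<Rightarrow> complex" where
  "ram_r r n k = (\<Sum>m \<in> {m. 1 \<le> m \<and> m \<le> k ^ r \<and> rgcd r m (k ^ r) = 1}.
      unit_root (k ^ r) powi (int m * n))"

definition M_r :: "nat \<Rightarrow> complex \<Rightarrow> int \<Rightarrow> nat \<Rightarrow> complex" where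
  "M_r r t n k = (1 / of_nat (k ^ r)) * (\<Sum>d \<in> {d. d dvd k}. ram_r r n (k div d) * t ^ d)"

definition delta_r :: "nat \<Rightarrow> int \<Rightarrow> nat \<Rightarrow> complex" where
  "delta_r r n k = (if int (k ^ r) dvd n then 1 else 0)"

text \<open>Q_r(n,k,m): number of solutions of a_1 x_1^r y_1 + ... + a_m x_m^r y_m = n (mod k^r),
  x_i mod k, y_i mod k^r; the coefficients a_1, a_2, ... are given by the sequence a.\<close>
definition Q_r :: "nat \<Rightarrow> int \<Rightarrow> nat \<Rightarrow> (nat \<Rightarrow> int) \<Rightarrow> nat \<Rightarrow> nat" where
  "Q_r r n k a m = card {(x, y). x \<in> {1..m} \<rightarrow>\<^sub>E {0..<int k} \<and> y \<in> {1..m} \<rightarrow>\<^sub>E {0..<int (k ^ r)} \<and>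
      [(\<Sum>i=1..m. a i * x i ^ r * y i) = n] (mod int (k ^ r))}"

definition stirling1s :: "nat \<Rightarrow> nat \<Rightarrow> int" where
  "stirling1s l m = coeff (\<Prod>i<l. [:- int i, 1:]) m"

end

theory Submission
  imports Defs
begin

lemma lcm_pow_nat: "lcm (a::nat) b ^ n = lcm (a^n) (b^n)"
proof (cases "a = 0 \<or> b = 0")
  case True then show ?thesis by (cases "n = 0") auto
next
  case False
  have g: "gcd a b ^ n \<noteq> 0" using False by auto
  have e1: "a*b = gcd a b * lcm a b" by (rule prod_gcd_lcm_nat)
  have e2: "a^n*b^n = gcd (a^n) (b^n) * lcm (a^n) (b^n)" by (rule prod_gcd_lcm_nat)
  have "gcd a b ^ n * lcm a b ^ n = (a*b)^n" unfolding e1 by (rule power_mult_distrib[symmetric])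
  also have "\<dots> = gcd a b ^ n * lcm (a^n) (b^n)" unfolding power_mult_distrib e2 gcd_exp ..
  finally show ?thesis using mult_left_cancel[OF g] by blast
qed
definition Pd :: "nat \<Rightarrow> nat \<Rightarrow> nat \<Rightarrow> nat \<Rightarrow> bool" where
  "Pd r k j d \<longleftrightarrow> d dvd k \<and> d^r dvd j \<and> (\<forall>e. e dvd k \<and> e^r dvd j \<longrightarrow> e dvd d)"

lemma Pd_unique: "Pd r k j d1 \<Longrightarrow> Pd r k j d2 \<Longrightarrow> d1 = d2"
  unfolding Pd_def by (meson dvd_antisym)

lemma Pd_exists:
  assumes "k > 0"
  shows "\<exists>d. Pd r k j d"
proof -
  define E where "E = {e. e dvd k \<and> e^r dvd j}"
  have fin: "finite E" unfolding E_def using assms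
    by (metis (no_types, lifting) finite_divisors_nat mem_Collect_eq rev_finite_subset subsetI)
  have one: "1 \<in> E" unfolding E_def by simp
  define d where "d = Max E"
  have dE: "d \<in> E" unfolding d_def using fin one Max_in by blast
  have "e dvd d" if "e \<in> E" for e
  proof -
    have "lcm e d \<in> E" using that dE unfolding E_def
      by (auto simp: lcm_pow_nat intro: lcm_least)
    then have "lcm e d \<le> d" unfolding d_def using fin by simp
    moreover have "d dvd lcm e d" by simp
    moreover have "e \<noteq> 0" "d \<noteq> 0" using that dE assms unfolding E_def by (auto intro!: gr0I)
    then have "lcm e d > 0" by (simp add: lcm_pos_nat)
    ultimately have "lcm e d = d" by (meson dvd_antisym dvd_imp_le order_antisym_conv)
    then show ?thesis by (metis dvd_lcm1)
  qed
  then have "Pd r k j d" using dE unfolding Pd_def E_def by auto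
  then show ?thesis by blast
qed

lemma Pd_count:
  assumes "r > 0" "k > 0" "Pd r k j d"
  shows "card {x\<in>{0..<k}. k^r dvd j * x^r} = d"
proof -
  have dk: "d dvd k" and dj: "d^r dvd j" and mx: "\<And>e. e dvd k \<Longrightarrow> e^r dvd j \<Longrightarrow> e dvd d"
    using assms(3) unfolding Pd_def by auto
  define c where "c = k div d"
  have kcd: "k = c * d" using dk unfolding c_def by simp
  have cpos: "c > 0" "d > 0" using kcd assms(2) by auto
  have iff: "k^r dvd j * x^r \<longleftrightarrow> c dvd x" for x
  proof
    assume "c dvd x"
    then obtain y where "x = c*y" by blast
    then show "k^r dvd j * x^r" using dj kcd
      by (simp add: power_mult_distrib mult_dvd_mono mult.commute mult.left_commute)
  next
    assume h: "k^r dvd j * x^r"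
    define g where "g = gcd k x"
    have gp: "g > 0" unfolding g_def using assms(2) by simp
    obtain k' x' where kx: "k = k' * g" "x = x' * g" "coprime k' x'"
      using gcd_coprime_exists[of k x] gp unfolding g_def by blast
    have "g^r * k'^r dvd g^r * (j * x'^r)" using h kx
      by (simp add: power_mult_distrib mult.commute mult.left_commute)
    then have "k'^r dvd j * x'^r" using gp by simp
    moreover have "coprime (k'^r) (x'^r)" using kx(3) by simp
    ultimately have "k'^r dvd j" by (metis coprime_dvd_mult_left_iff)
    moreover have "k' dvd k" using kx by simp
    ultimately have "k' dvd d" using mx by blast
    then obtain t where "d = k' * t" by blast
    then have "k' * (c * t) = k' * g" using kcd kx(1) by (metis mult.commute mult.left_commute)
    moreover have "k' \<noteq> 0" using kx assms(2) by (cases k') auto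
    ultimately have "c * t = g" by simp
    then show "c dvd x" using kx by (metis dvd_mult dvd_triv_left mult.commute)
  qed
  have "{x\<in>{0..<k}. k^r dvd j * x^r} = (\<lambda>i. c*i) ` {0..<d}"
  proof (rule set_eqI, rule iffI)
    fix x assume "x \<in> {x\<in>{0..<k}. k^r dvd j * x^r}"
    then have "x < k" "c dvd x" using iff by auto
    then obtain i where "x = c*i" by blast
    with \<open>x<k\<close> kcd have "i < d" by simp
    then show "x \<in> (\<lambda>i. c*i) ` {0..<d}" using \<open>x = c*i\<close> by auto
  next
    fix x assume "x \<in> (\<lambda>i. c*i) ` {0..<d}"
    then obtain i where "i < d" "x = c*i" by auto
    then have "x < k" using kcd cpos by simp
    then show "x \<in> {x\<in>{0..<k}. k^r dvd j * x^r}" using iff \<open>x = c*i\<close> by auto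
  qed
  also have "card \<dots> = d" using cpos by (simp add: card_image inj_on_def)
  finally show ?thesis .
qed

lemma rgcd_eq_1_iff:
  assumes "r > 0" "m > 0" "K > 0"
  shows "rgcd r m K = 1 \<longleftrightarrow> (\<forall>e. e^r dvd m \<and> e^r dvd K \<longrightarrow> e = 1)"
proof -
  define S where "S = {e ^ r | e. e \<ge> 1 \<and> e ^ r dvd m \<and> e ^ r dvd K}"
  have fin: "finite S"
  proof (rule finite_subset)
    show "S \<subseteq> {..K}" unfolding S_def using assms(3) by (auto dest: dvd_imp_le)
  qed simp
  have one: "1 \<in> S" unfolding S_def by force
  have "rgcd r m K = Max S" unfolding rgcd_def S_def ..
  also have "Max S = 1 \<longleftrightarrow> (\<forall>s\<in>S. s \<le> 1)"
    using fin one by (metis Max_ge Max_in empty_iff order_antisym)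
  also have "\<dots> \<longleftrightarrow> (\<forall>e. e^r dvd m \<and> e^r dvd K \<longrightarrow> e = 1)"
  proof
    assume A: "\<forall>s\<in>S. s \<le> 1"
    show "\<forall>e. e^r dvd m \<and> e^r dvd K \<longrightarrow> e = 1"
    proof (intro allI impI)
      fix e assume h: "e^r dvd m \<and> e^r dvd K"
      have "e \<noteq> 0" using h assms by auto
      then have "e^r \<in> S" using h unfolding S_def by force
      then have "e^r \<le> 1" using A by blast
      moreover have "e \<le> e^r" using \<open>e \<noteq> 0\<close> assms(1) by (simp add: self_le_power)
      ultimately show "e = 1" using \<open>e \<noteq> 0\<close> by linarith
    qed
  next
    assume "\<forall>e. e^r dvd m \<and> e^r dvd K \<longrightarrow> e = 1"
    then show "\<forall>s\<in>S. s \<le> 1" unfolding S_def by auto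
  qed
  finally show ?thesis .
qed



lemma Pd_fiber:
  assumes r: "r > 0" and k: "k > 0" and dk: "d dvd k"
  shows "{j\<in>{1..k^r}. Pd r k j d} =
    (\<lambda>m. m*d^r) ` {m. 1 \<le> m \<and> m \<le> (k div d)^r \<and> rgcd r m ((k div d)^r) = 1}"
proof -
  define c where "c = k div d"
  have kcd: "k = c * d" using dk unfolding c_def by simp
  have cpos: "c > 0" "d > 0" using kcd k by auto
  have kr: "k^r = c^r * d^r" using kcd by (simp add: power_mult_distrib)
  show ?thesis unfolding c_def[symmetric]
  proof (rule set_eqI, rule iffI)
    fix j assume "j \<in> {j\<in>{1..k^r}. Pd r k j d}"
    then have j1: "1 \<le> j" "j \<le> k^r" and P: "Pd r k j d" by auto
    then have "d^r dvd j" and mx: "\<And>e. e dvd k \<Longrightarrow> e^r dvd j \<Longrightarrow> e dvd d" unfolding Pd_def by auto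
    then obtain m where jm: "j = m * d^r" by (metis dvd_def mult.commute)
    have m1: "m \<ge> 1" using j1 jm by (cases m) auto
    have "m * d^r \<le> c^r * d^r" using j1 jm kr by simp
    then have m2: "m \<le> c^r" using cpos by simp
    have "rgcd r m (c^r) = 1"
    proof (subst rgcd_eq_1_iff)
      show "r > 0" "m > 0" "c^r > 0" using r m1 cpos by auto
      show "\<forall>e. e ^ r dvd m \<and> e ^ r dvd c ^ r \<longrightarrow> e = 1"
      proof (intro allI impI)
        fix e assume h: "e ^ r dvd m \<and> e ^ r dvd c ^ r"
        then have "e dvd c" using r by simp
        then have "e * d dvd k" using kcd by simp
        moreover have "(e*d)^r dvd j" using h jm by (simp add: power_mult_distrib)
        ultimately have "d * e dvd d * 1" using mx by (simp add: mult.commute)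
        then have "e dvd 1" using cpos by (simp only: nat_mult_dvd_cancel_disj) simp
        then show "e = 1" by simp
      qed
    qed
    then show "j \<in> (\<lambda>m. m*d^r) ` {m. 1 \<le> m \<and> m \<le> c^r \<and> rgcd r m (c^r) = 1}"
      using m1 m2 jm by blast
  next
    fix j assume "j \<in> (\<lambda>m. m*d^r) ` {m. 1 \<le> m \<and> m \<le> c^r \<and> rgcd r m (c^r) = 1}"
    then obtain m where jm: "j = m * d^r" and m1: "1 \<le> m" and m2: "m \<le> c^r"
      and rg: "rgcd r m (c^r) = 1" by blast
    have rg': "\<And>e. e^r dvd m \<Longrightarrow> e^r dvd c^r \<Longrightarrow> e = 1"
      using rg rgcd_eq_1_iff[of r m "c^r"] r m1 cpos by auto
    have "j \<ge> 1" using jm m1 cpos by simp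
    moreover have "j \<le> k^r" using jm m2 kr by simp
    moreover have "Pd r k j d" unfolding Pd_def
    proof (intro conjI allI impI)
      show "d dvd k" by fact
      show "d^r dvd j" using jm by simp
      fix e assume h: "e dvd k \<and> e ^ r dvd j"
      define g where "g = gcd e d"
      have gp: "g > 0" unfolding g_def using cpos by simp
      obtain e' d' where ed: "e = e' * g" "d = d' * g" "coprime e' d'"
        using gcd_coprime_exists[of e d] gp unfolding g_def by blast
      have "g^r * e'^r dvd g^r * (m * d'^r)" using h jm ed
        by (simp add: power_mult_distrib mult.commute mult.left_commute)
      then have "e'^r dvd m * d'^r" using gp by simp
      moreover have "coprime (e'^r) (d'^r)" using ed(3) by simp
      ultimately have 1: "e'^r dvd m" by (metis coprime_dvd_mult_left_iff)
      have "g * e' dvd g * (c * d')" using h kcd ed by (simp add: mult.commute mult.left_commute)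
      then have "e' dvd c * d'" using gp by simp
      then have "e' dvd c" using ed(3) by (metis coprime_dvd_mult_left_iff)
      then have "e'^r dvd c^r" by (simp add: dvd_power_same)
      then have "e' = 1" using rg' 1 by blast
      then show "e dvd d" using ed by simp
    qed
    ultimately show "j \<in> {j\<in>{1..k^r}. Pd r k j d}" by simp
  qed
qed

lemma unit_root_powi: "unit_root N powi z = exp (2 * of_real pi * \<i> * of_int z / of_nat N)"
  unfolding unit_root_def exp_power_int by (simp add: field_simps)

lemma unit_root_scale:
  assumes "K > 0" "D > 0"
  shows "unit_root (K*D) powi (int (m*D) * n) = unit_root K powi (int m * n)"
  unfolding unit_root_powi using assms by (simp add: field_simps)

definition Nc :: "nat \<Rightarrow> nat \<Rightarrow> nat \<Rightarrow> nat" where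
  "Nc r k j = card {x\<in>{0..<k}. k^r dvd j * x^r}"

lemma grouping:
  assumes r: "r > 0" and k: "k > 0"
  shows "(\<Sum>j\<in>{1..k^r}. unit_root (k^r) powi (int j * n) * g (Nc r k j)) =
         (\<Sum>d\<in>{d. d dvd k}. ram_r r n (k div d) * g d)"
proof -
  have NP: "Pd r k j (Nc r k j)" if "j \<in> {1..k^r}" for j
  proof -
    obtain d where "Pd r k j d" using Pd_exists k by blast
    moreover then have "Nc r k j = d" unfolding Nc_def using Pd_count r k by blast
    ultimately show ?thesis by simp
  qed
  have fin: "finite {d. d dvd k}" using k by simp
  have img: "Nc r k ` {1..k^r} \<subseteq> {d. d dvd k}" using NP unfolding Pd_def by auto
  let ?h = "\<lambda>j. unit_root (k^r) powi (int j * n) * g (Nc r k j)"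
  have "sum ?h {1..k^r} = (\<Sum>d\<in>{d. d dvd k}. sum ?h {j. j \<in> {1..k^r} \<and> Nc r k j = d})"
    by (rule sum.group[OF _ fin img, symmetric]) simp
  also have "\<dots> = (\<Sum>d\<in>{d. d dvd k}. ram_r r n (k div d) * g d)"
  proof (rule sum.cong[OF refl])
    fix d assume "d \<in> {d. d dvd k}"
    then have dk: "d dvd k" by simp
    define c where "c = k div d"
    have kcd: "k = c * d" using dk unfolding c_def by simp
    have cpos: "c > 0" "d > 0" using kcd k by auto
    have "{j. j \<in> {1..k^r} \<and> Nc r k j = d} = {j\<in>{1..k^r}. Pd r k j d}"
      using NP Pd_unique by blast
    also have "\<dots> = (\<lambda>m. m*d^r) ` {m. 1 \<le> m \<and> m \<le> c^r \<and> rgcd r m (c^r) = 1}"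
      unfolding c_def by (rule Pd_fiber[OF r k dk])
    finally have S: "{j. j \<in> {1..k^r} \<and> Nc r k j = d} = \<dots>" .
    have inj: "inj_on (\<lambda>m. m*d^r) X" for X using cpos by (simp add: inj_on_def)
    have "sum ?h {j. j \<in> {1..k^r} \<and> Nc r k j = d} =
          (\<Sum>m\<in>{m. 1 \<le> m \<and> m \<le> c^r \<and> rgcd r m (c^r) = 1}. ?h (m*d^r))"
      unfolding S by (rule sum.reindex[OF inj, unfolded comp_def])
    also have "\<dots> = (\<Sum>m\<in>{m. 1 \<le> m \<and> m \<le> c^r \<and> rgcd r m (c^r) = 1}.
                    unit_root (c^r) powi (int m * n) * g d)"
    proof (rule sum.cong[OF refl])
      fix m assume m: "m \<in> {m. 1 \<le> m \<and> m \<le> c^r \<and> rgcd r m (c^r) = 1}"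
      then have "m * d^r \<in> {j. j \<in> {1..k^r} \<and> Nc r k j = d}" unfolding S by blast
      then have "Nc r k (m*d^r) = d" by simp
      moreover have "unit_root (k^r) powi (int (m*d^r) * n) = unit_root (c^r) powi (int m * n)"
        using unit_root_scale[of "c^r" "d^r" m n] cpos kcd by (simp add: power_mult_distrib)
      ultimately show "?h (m*d^r) = unit_root (c^r) powi (int m * n) * g d" by simp
    qed
    also have "\<dots> = ram_r r n c * g d" unfolding ram_r_def by (simp add: sum_distrib_right)
    finally show "sum ?h {j. j \<in> {1..k^r} \<and> Nc r k j = d} = ram_r r n (k div d) * g d"
      unfolding c_def .
  qed
  finally show ?thesis .
qed



definition cN :: "nat \<Rightarrow> complex" where "cN N = 2 * of_real pi * \<i> / of_nat N"

lemma ur_exp: "unit_root N powi z = exp (cN N * of_int z)"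
  unfolding unit_root_powi cN_def by (simp add: field_simps)

lemma ur_add: "unit_root N powi (a + b) = unit_root N powi a * unit_root N powi b"
  unfolding ur_exp by (simp add: distrib_left exp_add)

lemma ur_sum: "finite I \<Longrightarrow> unit_root N powi (\<Sum>i\<in>I. f i) = (\<Prod>i\<in>I. unit_root N powi (f i))"
  unfolding ur_exp by (simp add: sum_distrib_left exp_sum)

lemma ur_one_iff:
  assumes "N > 0"
  shows "unit_root N powi s = 1 \<longleftrightarrow> int N dvd s"
proof -
  have "unit_root N powi s = 1 \<longleftrightarrow> (\<exists>n::int. 2 * pi * of_int s / of_nat N = of_int (2 * n) * pi)"
    unfolding ur_exp cN_def exp_eq_1 by simp
  also have "\<dots> \<longleftrightarrow> (\<exists>n::int. s = int N * n)"
  proof -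
    have "2 * pi * of_int s / of_nat N = of_int (2 * n) * pi \<longleftrightarrow> s = int N * n" for n
    proof -
      have "2 * pi * of_int s / of_nat N = of_int (2 * n) * pi \<longleftrightarrow> 2 * pi * of_int s = of_int (2 * n) * pi * of_nat N"
        using assms by (simp add: field_simps)
      also have "\<dots> \<longleftrightarrow> (of_int s :: real) = of_int n * of_nat N" using pi_gt_zero
        by (simp add: algebra_simps)
      also have "\<dots> \<longleftrightarrow> s = int N * n"
        by (metis mult.commute of_int_eq_iff of_int_mult of_int_of_nat_eq)
      finally show ?thesis .
    qed
    then show ?thesis by simp
  qed
  finally show ?thesis by (simp add: dvd_def)
qed

lemma ur_pow: "unit_root N powi (s * int v) = (unit_root N powi s) ^ v"
  unfolding ur_exp exp_of_nat_mult[symmetric] by (simp add: algebra_simps)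

lemma ur_period: "N > 0 \<Longrightarrow> (unit_root N powi s) ^ N = 1"
  by (metis ur_pow ur_one_iff dvd_triv_right mult.commute)

lemma orth0:
  assumes "N > 0"
  shows "(\<Sum>v<N. unit_root N powi (s * int v)) = (if int N dvd s then of_nat N else 0)"
proof -
  let ?w = "unit_root N powi s"
  have "(\<Sum>v<N. unit_root N powi (s * int v)) = (\<Sum>v<N. ?w ^ v)" by (simp add: ur_pow)
  also have "\<dots> = (if ?w = 1 then of_nat N else (1 - ?w^N) / (1 - ?w))" by (rule sum_gp_strict)
  also have "\<dots> = (if int N dvd s then of_nat N else 0)"
    using ur_one_iff[OF assms] ur_period[OF assms] by simp
  finally show ?thesis .
qed

lemma orth1:
  assumes "N > 0"
  shows "(\<Sum>j\<in>{1..N}. unit_root N powi (int j * s)) = (if int N dvd s then of_nat N else 0)"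
proof -
  let ?w = "unit_root N powi s"
  have "(\<Sum>j\<in>{1..N}. unit_root N powi (int j * s)) = (\<Sum>v<N. unit_root N powi (int (Suc v) * s))"
    by (rule sum.reindex_bij_witness[where i = Suc and j = "\<lambda>j. j - 1"]) auto
  also have "\<dots> = (\<Sum>v<N. ?w * unit_root N powi (s * int v))"
    by (intro sum.cong refl) (simp add: ur_add[symmetric] algebra_simps)
  also have "\<dots> = ?w * (if int N dvd s then of_nat N else 0)"
    by (simp add: sum_distrib_left[symmetric] orth0[OF assms])
  also have "\<dots> = (if int N dvd s then of_nat N else 0)"
    using ur_one_iff[OF assms] by simp
  finally show ?thesis .
qed



lemma sum_int_range: "(\<Sum>v\<in>{0..<int n}. f v) = (\<Sum>v\<in>{0..<n}. f (int v))"
proof -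
  have e: "{0..<int n} = int ` {0..<n}" using image_int_atLeastLessThan[of 0 n] by simp
  show ?thesis unfolding e by (subst sum.reindex) (auto simp: inj_on_def)
qed

lemma inner_sum:
  assumes r: "r > 0" and k: "k > 0" and cop: "coprime (b::int) (int k)"
  shows "(\<Sum>u\<in>{0..<int k}. \<Sum>v\<in>{0..<int (k^r)}. unit_root (k^r) powi (-(int j * b * u^r) * v))
         = of_nat (k^r) * of_nat (Nc r k j)"
proof -
  let ?N = "k^r"
  have Np: "?N > 0" using k by simp
  have copN: "coprime (int ?N) b" using cop r by (simp add: coprime_commute)
  have inner: "(\<Sum>v\<in>{0..<int ?N}. unit_root ?N powi (s * v)) = (if int ?N dvd s then of_nat ?N else 0)" for s
  proof -
    have "(\<Sum>v\<in>{0..<int ?N}. unit_root ?N powi (s * v)) = (\<Sum>v\<in>{0..<?N}. unit_root ?N powi (s * int v))"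
      by (rule sum_int_range)
    also have "\<dots> = (if int ?N dvd s then of_nat ?N else 0)"
      using orth0[OF Np, of s] by (simp add: atLeast0LessThan)
    finally show ?thesis .
  qed
  have dv: "int ?N dvd (-(int j * b * u^r)) \<longleftrightarrow> int ?N dvd int j * u^r" for u
  proof -
    have "int ?N dvd (-(int j * b * u^r)) \<longleftrightarrow> int ?N dvd b * (int j * u^r)"
      by (simp add: ac_simps)
    also have "\<dots> \<longleftrightarrow> int ?N dvd int j * u^r" using copN by (rule coprime_dvd_mult_right_iff)
    finally show ?thesis .
  qed
  have "(\<Sum>u\<in>{0..<int k}. \<Sum>v\<in>{0..<int ?N}. unit_root ?N powi (-(int j * b * u^r) * v))
      = (\<Sum>u\<in>{0..<int k}. if int ?N dvd int j * u^r then of_nat ?N else 0)"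
    by (simp only: inner dv)
  also have "\<dots> = (\<Sum>u\<in>{0..<k}. if int ?N dvd int j * int u^r then of_nat ?N else 0)"
    by (rule sum_int_range)
  also have "\<dots> = (\<Sum>u\<in>{0..<k}. if ?N dvd j * u^r then (of_nat ?N :: complex) else 0)"
  proof (rule sum.cong[OF refl])
    fix u
    have "int ?N dvd int j * int u^r \<longleftrightarrow> ?N dvd j * u^r"
      by (metis of_nat_dvd_iff of_nat_mult of_nat_power)
    then show "(if int ?N dvd int j * int u^r then (of_nat ?N :: complex) else 0) = (if ?N dvd j * u^r then of_nat ?N else 0)"
      by simp
  qed
  also have "\<dots> = (\<Sum>u\<in>{u\<in>{0..<k}. ?N dvd j * u^r}. of_nat ?N)"
    by (rule sum.inter_filter[symmetric]) simp
  also have "\<dots> = of_nat ?N * of_nat (Nc r k j)" unfolding Nc_def by simp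
  finally show ?thesis .
qed



lemma of_nat_card_filter:
  assumes "finite A"
  shows "(of_nat (card {p\<in>A. P p}) :: 'a::semiring_1) = (\<Sum>p\<in>A. if P p then 1 else 0)"
proof -
  have "card {p\<in>A. P p} = (\<Sum>p\<in>{p\<in>A. P p}. 1)" by (rule card_eq_sum)
  also have "\<dots> = (\<Sum>p\<in>A. if P p then 1 else 0)" by (rule sum.inter_filter[OF assms])
  finally show ?thesis by (simp add: of_nat_sum if_distrib cong: if_cong)
qed

lemma Q_formula:
  assumes r: "r > 0" and k: "k > 0" and cop: "\<forall>i\<ge>1. coprime (a i) (int k)"
  shows "of_nat (k^r) * (of_nat (Q_r r n k a m) :: complex) =
         of_nat (k^r) ^ m * (\<Sum>j\<in>{1..k^r}. unit_root (k^r) powi (int j * n) * of_nat (Nc r k j) ^ m)"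
proof -
  let ?N = "k^r"
  define I where "I = {1..m}"
  define X where "X = I \<rightarrow>\<^sub>E {0..<int k}"
  define Y where "Y = I \<rightarrow>\<^sub>E {0..<int ?N}"
  define S where "S = (\<lambda>x y. \<Sum>i\<in>I. a i * x i ^ r * y i)"
  define C where "C = (\<lambda>x y. [S x y = n] (mod int ?N))"
  define F where "F = (\<lambda>j i u v. unit_root ?N powi (-(int j * a i * u^r) * v))"
  have Np: "?N > 0" using k by simp
  have finI: "finite I" unfolding I_def by simp
  have finX: "finite X" unfolding X_def by (simp add: finite_PiE finI)
  have finY: "finite Y" unfolding Y_def by (simp add: finite_PiE finI)
  have Qe: "Q_r r n k a m = card {p\<in>X\<times>Y. C (fst p) (snd p)}"
    unfolding Q_r_def X_def Y_def C_def S_def I_def by (rule arg_cong[where f = card]) auto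
  have "(of_nat ?N :: complex) * of_nat (Q_r r n k a m) =
        of_nat ?N * (\<Sum>p\<in>X\<times>Y. if C (fst p) (snd p) then 1 else 0)"
    unfolding Qe by (subst of_nat_card_filter[OF finite_cartesian_product[OF finX finY]]) (rule refl)
  also have "\<dots> = (\<Sum>p\<in>X\<times>Y. if C (fst p) (snd p) then of_nat ?N else 0)"
    by (simp add: sum_distrib_left if_distrib cong: if_cong)
  also have "\<dots> = (\<Sum>p\<in>X\<times>Y. \<Sum>j\<in>{1..?N}. unit_root ?N powi (int j * (n - S (fst p) (snd p))))"
  proof (rule sum.cong[OF refl])
    fix p
    have "C (fst p) (snd p) \<longleftrightarrow> int ?N dvd (n - S (fst p) (snd p))"
      unfolding C_def cong_iff_dvd_diff by (simp add: dvd_diff_commute)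
    then show "(if C (fst p) (snd p) then of_nat ?N else 0) =
       (\<Sum>j\<in>{1..?N}. unit_root ?N powi (int j * (n - S (fst p) (snd p))))"
      using orth1[OF Np] by simp
  qed
  also have "\<dots> = (\<Sum>p\<in>X\<times>Y. \<Sum>j\<in>{1..?N}. unit_root ?N powi (int j * n) *
                      (\<Prod>i\<in>I. F j i (fst p i) (snd p i)))"
  proof (intro sum.cong refl)
    fix p j
    have "int j * (n - S (fst p) (snd p)) = int j * n + (\<Sum>i\<in>I. -(int j * a i * fst p i ^ r) * snd p i)"
      unfolding S_def by (simp add: algebra_simps sum_distrib_left sum_negf)
    then show "unit_root ?N powi (int j * (n - S (fst p) (snd p))) =
               unit_root ?N powi (int j * n) * (\<Prod>i\<in>I. F j i (fst p i) (snd p i))"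
      unfolding F_def by (simp add: ur_add ur_sum[OF finI])
  qed
  also have "\<dots> = (\<Sum>j\<in>{1..?N}. unit_root ?N powi (int j * n) *
                      (\<Sum>x\<in>X. \<Sum>y\<in>Y. \<Prod>i\<in>I. F j i (x i) (y i)))"
    by (subst sum.swap) (simp add: sum_distrib_left sum.cartesian_product case_prod_beta)
  also have "\<dots> = (\<Sum>j\<in>{1..?N}. unit_root ?N powi (int j * n) * (of_nat ?N * of_nat (Nc r k j)) ^ m)"
  proof (rule sum.cong[OF refl])
    fix j
    have "(\<Sum>x\<in>X. \<Sum>y\<in>Y. \<Prod>i\<in>I. F j i (x i) (y i)) =
          (\<Sum>x\<in>X. \<Prod>i\<in>I. \<Sum>v\<in>{0..<int ?N}. F j i (x i) v)"
      unfolding Y_def by (intro sum.cong refl prod_sum_PiE[symmetric]) (auto simp: finI)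
    also have "\<dots> = (\<Prod>i\<in>I. \<Sum>u\<in>{0..<int k}. \<Sum>v\<in>{0..<int ?N}. F j i u v)"
      unfolding X_def by (rule prod_sum_PiE[symmetric]) (auto simp: finI)
    also have "\<dots> = (\<Prod>i\<in>I. of_nat ?N * of_nat (Nc r k j))"
    proof (rule prod.cong[OF refl])
      fix i assume "i \<in> I"
      then have "coprime (a i) (int k)" using cop unfolding I_def by auto
      then show "(\<Sum>u\<in>{0..<int k}. \<Sum>v\<in>{0..<int ?N}. F j i u v) = of_nat ?N * of_nat (Nc r k j)"
        unfolding F_def by (rule inner_sum[OF r k])
    qed
    also have "\<dots> = (of_nat ?N * of_nat (Nc r k j)) ^ m" unfolding I_def by simp
    finally show "unit_root ?N powi (int j * n) * (\<Sum>x\<in>X. \<Sum>y\<in>Y. \<Prod>i\<in>I. F j i (x i) (y i)) =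
       unit_root ?N powi (int j * n) * (of_nat ?N * of_nat (Nc r k j)) ^ m" by simp
  qed
  also have "\<dots> = of_nat ?N ^ m * (\<Sum>j\<in>{1..?N}. unit_root ?N powi (int j * n) * of_nat (Nc r k j) ^ m)"
    by (simp add: sum_distrib_left power_mult_distrib algebra_simps)
  finally show ?thesis .
qed



definition ff :: "nat \<Rightarrow> nat \<Rightarrow> complex" where
  "ff l d = (\<Prod>i<l. of_nat d - of_nat i)"

lemma ff_Suc: "ff (Suc l) d = ff l d * (of_nat d - of_nat l)"
  unfolding ff_def by simp

lemma ff_zero: "d < l \<Longrightarrow> ff l d = 0"
  unfolding ff_def by (auto simp: prod_zero_iff)

lemma stirling_int:
  assumes "l \<ge> 1"
  shows "(\<Sum>m=1..l. stirling1s l m * x ^ m) = (\<Prod>i<l. x - int i)"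
proof -
  define P where "P = (\<Prod>i<l. [:- int i, 1:])"
  have pP: "poly P y = (\<Prod>i<l. y - int i)" for y unfolding P_def by (simp add: poly_prod)
  have degP: "degree P \<le> l" unfolding P_def
    using degree_prod_sum_le[of "{..<l}" "\<lambda>i. [:- int i, 1:]"] by simp
  have c0: "coeff P 0 = 0"
  proof -
    have "coeff P 0 = poly P 0" by (simp add: poly_0_coeff_0)
    also have "\<dots> = 0" unfolding pP using assms by (auto simp: prod_zero_iff)
    finally show ?thesis .
  qed
  have "(\<Prod>i<l. x - int i) = (\<Sum>i\<le>degree P. coeff P i * x ^ i)" using pP poly_altdef by metis
  also have "\<dots> = (\<Sum>i\<le>l. coeff P i * x ^ i)"
    by (rule sum.mono_neutral_left) (use degP in \<open>auto simp: coeff_eq_0\<close>)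
  also have "\<dots> = (\<Sum>i=1..l. coeff P i * x ^ i)"
    by (rule sum.mono_neutral_right) (use c0 in \<open>auto simp: Suc_le_eq\<close>)
  finally show ?thesis unfolding stirling1s_def P_def by simp
qed

lemma stirling_ff:
  assumes "l \<ge> 1"
  shows "(\<Sum>m=1..l. of_int (stirling1s l m) * of_nat d ^ m) = ff l d"
proof -
  have "of_int (\<Sum>m=1..l. stirling1s l m * int d ^ m) = (of_int (\<Prod>i<l. int d - int i) :: complex)"
    using stirling_int[OF assms] by simp
  then show ?thesis unfolding ff_def by simp
qed

lemma deriv_poly_iter:
  assumes "finite D"
  shows "(deriv ^^ l) (\<lambda>t. \<Sum>d\<in>D. c d * t ^ d) = (\<lambda>t. \<Sum>d\<in>D. c d * ff l d * t ^ (d - l))"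
proof (induction l)
  case 0
  then show ?case by (simp add: ff_def)
next
  case (Suc l)
  have "deriv (\<lambda>t. \<Sum>d\<in>D. c d * ff l d * t ^ (d - l)) t = (\<Sum>d\<in>D. c d * ff (Suc l) d * t ^ (d - Suc l))" for t
  proof (rule DERIV_imp_deriv)
    have D1: "((\<lambda>t. \<Sum>d\<in>D. c d * ff l d * t ^ (d - l)) has_field_derivative
          (\<Sum>d\<in>D. c d * ff l d * (of_nat (d - l) * t ^ (d - l - 1)))) (at t)"
    proof (intro DERIV_sum DERIV_cmult)
      fix d assume "d \<in> D"
      show "((\<lambda>x. x^(d-l)) has_field_derivative of_nat (d-l) * t^(d-l-1)) (at t)"
        using DERIV_power[OF DERIV_ident, of "d-l" t UNIV] by simp
    qed
    have pw: "c d * ff l d * (of_nat (d - l) * t ^ (d - l - 1)) = c d * ff (Suc l) d * t ^ (d - Suc l)" for d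
    proof (cases "l \<le> d")
      case True
      then show ?thesis by (simp add: ff_Suc of_nat_diff)
    next
      case False
      then show ?thesis by (simp add: ff_Suc ff_zero)
    qed
    have E: "(\<Sum>d\<in>D. c d * ff l d * (of_nat (d - l) * t ^ (d - l - 1))) =
             (\<Sum>d\<in>D. c d * ff (Suc l) d * t ^ (d - Suc l))"
      by (intro sum.cong refl pw)
    show "((\<lambda>t. \<Sum>d\<in>D. c d * ff l d * t ^ (d - l)) has_field_derivative
          (\<Sum>d\<in>D. c d * ff (Suc l) d * t ^ (d - Suc l))) (at t)" using D1 unfolding E .
  qed
  then have "deriv (\<lambda>t. \<Sum>d\<in>D. c d * ff l d * t ^ (d - l)) = (\<lambda>t. \<Sum>d\<in>D. c d * ff (Suc l) d * t ^ (d - Suc l))"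
    by (intro ext)
  then show ?case using Suc.IH by simp
qed

lemma choose_ff: "(of_nat (d choose l) :: complex) = ff l d / fact l"
proof -
  have "fact l * (of_nat d gchoose l :: complex) = ff l d"
    unfolding gbinomial_mult_fact ff_def by (simp add: atLeast0LessThan)
  then show ?thesis by (simp add: binomial_gbinomial field_simps)
qed



theorem proposition3:
  fixes r k :: nat and n :: int and a :: "nat \<Rightarrow> int"
  assumes "r > 0" and "k > 0"
    and "\<forall>i\<ge>1. coprime (a i) (int k)"
  shows "(\<forall>l\<ge>1. (deriv ^^ l) (\<lambda>t. M_r r t n k) 1 =
            (\<Sum>m=1..l. of_int (stirling1s l m) * of_nat (Q_r r n k a m) / of_nat k ^ (r * m)))
       \<and> (\<forall>t. M_r r t n k = delta_r r n k +
            (\<Sum>l=1..k. (t - 1) ^ l / fact l *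
               (\<Sum>m=1..l. of_int (stirling1s l m) * of_nat (Q_r r n k a m) / of_nat k ^ (r * m))))
       \<and> (\<forall>z::complex. (\<lambda>j. z ^ Suc j / fact (Suc j) * of_nat (Q_r r n k a (Suc j)) / of_nat k ^ (r * Suc j))
            sums (M_r r (exp z) n k - delta_r r n k))"
proof -
  note r = assms(1) and k = assms(2) and cop = assms(3)
  let ?N = "k^r"
  define Dk where "Dk = {d. d dvd k}"
  define cc where "cc d = ram_r r n (k div d) / of_nat ?N" for d
  have finD: "finite Dk" unfolding Dk_def using k by simp
  have Np: "(of_nat ?N :: complex) \<noteq> 0" using k by simp
  have QA: "of_nat (Q_r r n k a m) / of_nat k ^ (r * m) = (\<Sum>d\<in>Dk. cc d * of_nat d ^ m)" for m
  proof -
    have "of_nat ?N * (of_nat (Q_r r n k a m) :: complex) =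
          of_nat ?N ^ m * (\<Sum>d\<in>Dk. ram_r r n (k div d) * of_nat d ^ m)"
      unfolding Q_formula[OF r k cop] Dk_def grouping[OF r k, of n "\<lambda>d. of_nat d ^ m"] ..
    moreover have "(of_nat k ^ (r * m) :: complex) = of_nat ?N ^ m" by (simp add: power_mult)
    ultimately show ?thesis unfolding cc_def using Np k
      by (simp add: field_simps sum_divide_distrib[symmetric])
  qed
  have Meq: "M_r r t n k = (\<Sum>d\<in>Dk. cc d * t ^ d)" for t
    unfolding M_r_def cc_def Dk_def by (simp add: sum_distrib_left field_simps)
  have deq: "delta_r r n k = (\<Sum>d\<in>Dk. cc d)"
  proof -
    have "(\<Sum>d\<in>Dk. ram_r r n (k div d)) = (\<Sum>j\<in>{1..?N}. unit_root ?N powi (int j * n))"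
      using grouping[OF r k, of n "\<lambda>_. 1"] unfolding Dk_def by simp
    also have "\<dots> = (if int ?N dvd n then of_nat ?N else 0)" using orth1[of ?N n] k by simp
    finally show ?thesis unfolding cc_def delta_r_def using Np k
      by (simp add: sum_divide_distrib[symmetric])
  qed
  define DL where "DL l = (\<Sum>d\<in>Dk. cc d * ff l d)" for l
  have inner: "(\<Sum>m=1..l. of_int (stirling1s l m) * of_nat (Q_r r n k a m) / of_nat k ^ (r * m)) = DL l"
    if "l \<ge> 1" for l
  proof -
    have "(\<Sum>m=1..l. of_int (stirling1s l m) * of_nat (Q_r r n k a m) / of_nat k ^ (r * m)) =
          (\<Sum>m=1..l. of_int (stirling1s l m) * (\<Sum>d\<in>Dk. cc d * of_nat d ^ m))"
      by (simp add: QA[symmetric])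
    also have "\<dots> = (\<Sum>d\<in>Dk. cc d * (\<Sum>m=1..l. of_int (stirling1s l m) * of_nat d ^ m))"
      unfolding sum_distrib_left by (subst sum.swap) (simp add: algebra_simps)
    also have "\<dots> = DL l" unfolding DL_def stirling_ff[OF that] ..
    finally show ?thesis .
  qed
  have part1: "\<forall>l\<ge>1. (deriv ^^ l) (\<lambda>t. M_r r t n k) 1 =
            (\<Sum>m=1..l. of_int (stirling1s l m) * of_nat (Q_r r n k a m) / of_nat k ^ (r * m))"
  proof (intro allI impI)
    fix l :: nat assume l: "l \<ge> 1"
    have "(\<lambda>t. M_r r t n k) = (\<lambda>t. \<Sum>d\<in>Dk. cc d * t ^ d)" using Meq by (intro ext)
    then have "(deriv ^^ l) (\<lambda>t. M_r r t n k) 1 = (\<Sum>d\<in>Dk. cc d * ff l d * 1 ^ (d - l))"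
      using deriv_poly_iter[OF finD, of l cc] by simp
    also have "\<dots> = DL l" unfolding DL_def by simp
    finally show "(deriv ^^ l) (\<lambda>t. M_r r t n k) 1 =
            (\<Sum>m=1..l. of_int (stirling1s l m) * of_nat (Q_r r n k a m) / of_nat k ^ (r * m))"
      using inner[OF l] by simp
  qed
  have part2: "\<forall>t. M_r r t n k = delta_r r n k +
            (\<Sum>l=1..k. (t - 1) ^ l / fact l *
               (\<Sum>m=1..l. of_int (stirling1s l m) * of_nat (Q_r r n k a m) / of_nat k ^ (r * m)))"
  proof
    fix t :: complex
    have tp: "t ^ d = (\<Sum>l\<le>k. (t - 1) ^ l / fact l * ff l d)" if "d \<in> Dk" for d
    proof -
      have dk: "d \<le> k" using that k unfolding Dk_def by (simp add: dvd_imp_le)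
      have "t ^ d = ((t - 1) + 1) ^ d" by simp
      also have "\<dots> = (\<Sum>l\<le>d. of_nat (d choose l) * (t - 1) ^ l)"
        unfolding binomial_ring by simp
      also have "\<dots> = (\<Sum>l\<le>k. of_nat (d choose l) * (t - 1) ^ l)"
        by (rule sum.mono_neutral_left) (use dk in auto)
      also have "\<dots> = (\<Sum>l\<le>k. (t - 1) ^ l / fact l * ff l d)"
        by (simp add: choose_ff field_simps)
      finally show ?thesis .
    qed
    have "M_r r t n k = (\<Sum>d\<in>Dk. cc d * (\<Sum>l\<le>k. (t - 1) ^ l / fact l * ff l d))"
      unfolding Meq using tp by (intro sum.cong refl) simp
    also have "\<dots> = (\<Sum>l\<le>k. (t - 1) ^ l / fact l * DL l)"
      unfolding DL_def by (simp add: sum_distrib_left sum.swap[of _ Dk] algebra_simps)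
    also have "\<dots> = DL 0 + (\<Sum>l=1..k. (t - 1) ^ l / fact l * DL l)"
    proof -
      have "{..k} = insert 0 {1..k}" by auto
      then show ?thesis by simp
    qed
    also have "DL 0 = delta_r r n k" unfolding DL_def deq by (simp add: ff_def)
    also have "(\<Sum>l=1..k. (t - 1) ^ l / fact l * DL l) =
       (\<Sum>l=1..k. (t - 1) ^ l / fact l *
               (\<Sum>m=1..l. of_int (stirling1s l m) * of_nat (Q_r r n k a m) / of_nat k ^ (r * m)))"
    proof (intro sum.cong refl)
      fix l assume "l \<in> {1..k}"
      then have "l \<ge> 1" by simp
      show "(t - 1) ^ l / fact l * DL l = (t - 1) ^ l / fact l *
               (\<Sum>m=1..l. of_int (stirling1s l m) * of_nat (Q_r r n k a m) / of_nat k ^ (r * m))"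
        unfolding inner[OF \<open>l \<ge> 1\<close>] ..
    qed
    finally show "M_r r t n k = delta_r r n k + (\<Sum>l=1..k. (t - 1) ^ l / fact l *
               (\<Sum>m=1..l. of_int (stirling1s l m) * of_nat (Q_r r n k a m) / of_nat k ^ (r * m)))" .
  qed
  have part3: "\<forall>z::complex. (\<lambda>j. z ^ Suc j / fact (Suc j) * of_nat (Q_r r n k a (Suc j)) / of_nat k ^ (r * Suc j))
            sums (M_r r (exp z) n k - delta_r r n k)"
  proof
    fix z :: complex
    define f where "f j = z ^ j / fact j * of_nat (Q_r r n k a j) / of_nat k ^ (r * j)" for j
    have ex: "(\<lambda>j. cc d * ((z * of_nat d) ^ j / fact j)) sums (cc d * exp (z * of_nat d))" for d
    proof -
      have "(\<lambda>j. (z * of_nat d) ^ j /\<^sub>R fact j) sums exp (z * of_nat d)" by (rule exp_converges)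
      then have "(\<lambda>j. (z * of_nat d) ^ j / fact j) sums exp (z * of_nat d)"
        by (simp add: scaleR_conv_of_real divide_inverse mult.commute)
      then show ?thesis by (rule sums_mult)
    qed
    have "(\<lambda>j. \<Sum>d\<in>Dk. cc d * ((z * of_nat d) ^ j / fact j)) sums (\<Sum>d\<in>Dk. cc d * exp (z * of_nat d))"
      by (rule sums_sum) (rule ex)
    moreover have "(\<Sum>d\<in>Dk. cc d * ((z * of_nat d) ^ j / fact j)) = f j" for j
    proof -
      have "(\<Sum>d\<in>Dk. cc d * ((z * of_nat d) ^ j / fact j)) = z ^ j / fact j * (\<Sum>d\<in>Dk. cc d * of_nat d ^ j)"
        by (simp add: sum_distrib_left power_mult_distrib algebra_simps)
      then show ?thesis unfolding f_def QA[symmetric] by simp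
    qed
    moreover have "(\<Sum>d\<in>Dk. cc d * exp (z * of_nat d)) = M_r r (exp z) n k"
      unfolding Meq by (simp add: exp_of_nat_mult[symmetric] mult.commute)
    ultimately have "f sums M_r r (exp z) n k" by simp
    moreover have "f 0 = delta_r r n k" unfolding f_def deq using QA[of 0] by simp
    ultimately have "f sums ((M_r r (exp z) n k - delta_r r n k) + f 0)" by simp
    then have "(\<lambda>j. f (Suc j)) sums (M_r r (exp z) n k - delta_r r n k)" by (rule sums_Suc_iff[THEN iffD2])
    then show "(\<lambda>j. z ^ Suc j / fact (Suc j) * of_nat (Q_r r n k a (Suc j)) / of_nat k ^ (r * Suc j))
            sums (M_r r (exp z) n k - delta_r r n k)" unfolding f_def .
  qed
  show ?thesis using part1 part2 part3 by blast
qed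

end
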